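(* Let $\Delta\geq 1$ be an integer and let $G$ be a graph with $n$ vertices, $m$ edges and maximum degree $\Delta$. Then $$c(G)\;\leq\;1+n+\left(\frac{2^{\Delta+1}-\Delta-2}{\binom{\Delta+1}{2}}\right)m\;\leq\;1+\left(\frac{2^{\Delta+1}-1}{\Delta+1}\right)n.$$
   Context: All graphs are finite, simple and undirected. A clique of a graph $G$ is a (possibly empty) set of pairwise adjacent vertices; $c(G)$ denotes the number of cliques of $G$ (including the empty clique, all single vertices and all edges). *)

theory Defs
  imports Complex_Main
begin

definition simple_graph :: "'a set \<Rightarrow> 'a set set \<Rightarrow> bool" where
  "simple_graph V E \<longleftrightarrow> finite V \<and> (\<forall>e\<in>E. e \<subseteq> V \<and> card e = 2)"

definition degree :: "'a set set \<Rightarrow> 'a \<Rightarrow> nat" where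
  "degree E v = card {e\<in>E. v \<in> e}"

definition max_degree :: "'a set \<Rightarrow> 'a set set \<Rightarrow> nat" where
  "max_degree V E = Max (degree E ` V)"

definition is_clique :: "'a set \<Rightarrow> 'a set set \<Rightarrow> 'a set \<Rightarrow> bool" where
  "is_clique V E S \<longleftrightarrow> S \<subseteq> V \<and> (\<forall>u\<in>S. \<forall>v\<in>S. u \<noteq> v \<longrightarrow> {u, v} \<in> E)"

definition num_cliques :: "'a set \<Rightarrow> 'a set set \<Rightarrow> nat" where
  "num_cliques V E = card {S. is_clique V E S}"

end

theory Submission
  imports Defs
begin

definition hh :: "nat \<Rightarrow> real" where "hh j = 1 / real ((j+2) choose 2)"

lemma hh_nonneg: "hh j \<ge> 0" unfolding hh_def by simp

lemma lemA:
  assumes "finite N"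
  shows "(\<Sum>S\<in>Pow N. hh (card S)) = (\<Sum>j\<le>card N. real (card N choose j) * hh j)"
proof -
  have "(\<Sum>S\<in>Pow N. hh (card S)) = (\<Sum>j\<le>card N. \<Sum>S\<in>{S. S \<in> Pow N \<and> card S = j}. hh (card S))"
    by (rule sum.group[symmetric]) (auto simp: assms card_mono)
  also have "\<dots> = (\<Sum>j\<le>card N. real (card N choose j) * hh j)"
  proof (rule sum.cong[OF refl])
    fix j
    have "(\<Sum>S\<in>{S. S \<in> Pow N \<and> card S = j}. hh (card S)) = (\<Sum>S\<in>{S. S \<subseteq> N \<and> card S = j}. hh j)"
      by (rule sum.cong) auto
    also have "\<dots> = real (card N choose j) * hh j" using n_subsets[OF assms, of j] by simp
    finally show "(\<Sum>S\<in>{S. S \<in> Pow N \<and> card S = j}. hh (card S)) = real (card N choose j) * hh j" .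
  qed
  finally show ?thesis .
qed

lemma lemB:
  assumes "n \<le> m"
  shows "(\<Sum>j\<le>n. real (n choose j) * hh j) \<le> (\<Sum>j\<le>m. real (m choose j) * hh j)"
proof -
  have "(\<Sum>j\<le>n. real (n choose j) * hh j) \<le> (\<Sum>j\<le>n. real (m choose j) * hh j)"
    by (rule sum_mono, rule mult_right_mono) (auto simp: binomial_right_mono assms hh_nonneg)
  also have "\<dots> \<le> (\<Sum>j\<le>m. real (m choose j) * hh j)"
    by (rule sum_mono2) (auto simp: assms hh_nonneg)
  finally show ?thesis .
qed

lemma lemC:
  "(\<Sum>j\<le>k. real (k choose j) * hh j) = (2 ^ (k + 2) - real (k+1) - 2) / real ((k + 2) choose 2)"
proof -
  have pos: "real ((k + 2) choose 2) > 0" by simp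
  have eq: "real (k choose j) * hh j = real ((k+2) choose (j+2)) / real ((k + 2) choose 2)" for j
  proof (cases "j \<le> k")
    case True
    have "((k+2) choose (j+2)) * ((j+2) choose 2) = ((k+2) choose 2) * (k choose j)"
      using choose_mult[of 2 "j+2" "k+2"] True by simp
    hence "real ((k+2) choose (j+2)) * real ((j+2) choose 2) = real ((k+2) choose 2) * real (k choose j)"
      by (metis of_nat_mult)
    moreover have "real ((j+2) choose 2) > 0" by simp
    ultimately show ?thesis using pos unfolding hh_def by (simp add: field_simps)
  next
    case False
    hence "k choose j = 0" "(k+2) choose (j+2) = 0" by (simp_all add: binomial_eq_0)
    thus ?thesis unfolding hh_def by (simp only: of_nat_0 mult_zero_left div_0)
  qed
  have "(\<Sum>j\<le>k. real ((k+2) choose (j+2))) = 2 ^ (k + 2) - real (k+1) - 2"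
  proof -
    have "(2::real) ^ (k+2) = (\<Sum>i\<le>Suc (Suc k). real (Suc (Suc k) choose i))"
      using choose_row_sum[of "k+2"] by (metis of_nat_numeral of_nat_power of_nat_sum add_2_eq_Suc')
    also have "\<dots> = 1 + (real k + 2) + (\<Sum>j\<le>k. real (Suc (Suc k) choose Suc (Suc j)))"
      by (simp only: sum.atMost_Suc_shift binomial_n_0 binomial_1)
    also have "(\<Sum>j\<le>k. real (Suc (Suc k) choose Suc (Suc j))) = (\<Sum>j\<le>k. real ((k+2) choose (j+2)))"
      by simp
    finally show ?thesis by simp
  qed
  thus ?thesis by (simp add: eq sum_divide_distrib[symmetric])
qed


lemma per_edge:
  assumes G: "simple_graph V E" and deg: "\<forall>v\<in>V. degree E v \<le> D" and eE: "e \<in> E"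
  shows "(\<Sum>K\<in>{K. is_clique V E K \<and> e \<subseteq> K}. 1 / real (card K choose 2))
         \<le> (\<Sum>j\<le>D - 1. real ((D - 1) choose j) * hh j)"
proof -
  have finV: "finite V" using G by (simp add: simple_graph_def)
  have eV: "e \<subseteq> V" and ce: "card e = 2" using G eE by (auto simp: simple_graph_def)
  obtain u v where e: "e = {u,v}" and uv: "u \<noteq> v" using ce by (auto simp: card_2_iff)
  have uV: "u \<in> V" and vV: "v \<in> V" using eV e by auto
  define N where "N = {w\<in>V. w \<noteq> u \<and> w \<noteq> v \<and> {u,w} \<in> E \<and> {v,w} \<in> E}"
  have finN: "finite N" using finV by (simp add: N_def)
  define Ks where "Ks = {K. is_clique V E K \<and> e \<subseteq> K}"
  have finKs: "finite Ks"
    by (rule finite_subset[of _ "Pow V"]) (auto simp: Ks_def is_clique_def finV)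
  have cardN: "card N \<le> D - 1"
  proof -
    have "inj_on (\<lambda>w. {u,w}) (insert v N)"
      by (rule inj_onI) (auto simp: N_def doubleton_eq_iff)
    moreover have "(\<lambda>w. {u,w}) ` (insert v N) \<subseteq> {e\<in>E. u \<in> e}"
      using eE e by (auto simp: N_def)
    moreover have "finite {e\<in>E. u \<in> e}"
    proof -
      have "finite (Pow V)" using finV by simp
      moreover have "{e\<in>E. u \<in> e} \<subseteq> Pow V" using G by (auto simp: simple_graph_def)
      ultimately show ?thesis by (rule finite_subset[rotated])
    qed
    ultimately have "card (insert v N) \<le> card {e\<in>E. u \<in> e}"
      by (metis card_image card_mono)
    also have "\<dots> \<le> D" using deg uV by (simp add: degree_def)
    finally show ?thesis using finN by (simp add: N_def)
  qed
  have "(\<Sum>K\<in>Ks. 1 / real (card K choose 2)) = (\<Sum>K\<in>Ks. hh (card (K - e)))"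
  proof (rule sum.cong[OF refl])
    fix K assume K: "K \<in> Ks"
    hence "finite K" "e \<subseteq> K" using finV by (auto simp: Ks_def is_clique_def intro: finite_subset)
    hence "card (K - e) + 2 = card K" using ce card_mono[of K e] card_Diff_subset[of e K] finite_subset[of e K] by simp
    thus "1 / real (card K choose 2) = hh (card (K - e))" unfolding hh_def by metis
  qed
  also have "\<dots> = (\<Sum>S\<in>(\<lambda>K. K - e) ` Ks. hh (card S))"
  proof (rule sum.reindex[symmetric, unfolded comp_def])
    show "inj_on (\<lambda>K. K - e) Ks"
    proof (rule inj_onI)
      fix x y assume "x \<in> Ks" "y \<in> Ks" "x - e = y - e"
      hence "e \<subseteq> x" "e \<subseteq> y" "x - e = y - e" by (auto simp: Ks_def)
      thus "x = y" by (metis Diff_partition)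
    qed
  qed
  also have "\<dots> \<le> (\<Sum>S\<in>Pow N. hh (card S))"
  proof (rule sum_mono2)
    show "finite (Pow N)" using finN by simp
    show "(\<lambda>K. K - e) ` Ks \<subseteq> Pow N"
    proof
      fix S assume "S \<in> (\<lambda>K. K - e) ` Ks"
      then obtain K where K: "K \<in> Ks" "S = K - e" by auto
      show "S \<in> Pow N"
      proof (rule PowI, rule subsetI)
        fix w assume w: "w \<in> S"
        have "u \<in> K" "v \<in> K" "w \<in> K" "K \<subseteq> V" "w \<noteq> u" "w \<noteq> v"
          using K w e by (auto simp: Ks_def is_clique_def)
        moreover have "\<forall>x\<in>K. \<forall>y\<in>K. x \<noteq> y \<longrightarrow> {x, y} \<in> E" using K by (auto simp: Ks_def is_clique_def)
        ultimately show "w \<in> N" unfolding N_def by auto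
      qed
    qed
  qed (simp add: hh_nonneg)
  also have "\<dots> = (\<Sum>j\<le>card N. real (card N choose j) * hh j)" by (rule lemA[OF finN])
  also have "\<dots> \<le> (\<Sum>j\<le>D - 1. real ((D - 1) choose j) * hh j)" by (rule lemB[OF cardN])
  finally show ?thesis by (simp add: Ks_def)
qed


lemma handshake:
  assumes G: "simple_graph V E"
  shows "(\<Sum>v\<in>V. degree E v) = 2 * card E"
proof -
  have finV: "finite V" using G by (simp add: simple_graph_def)
  have finE: "finite E"
    by (rule finite_subset[of _ "Pow V"]) (use G finV in \<open>auto simp: simple_graph_def\<close>)
  have "(\<Sum>v\<in>V. degree E v) = (\<Sum>v\<in>V. \<Sum>e\<in>{e\<in>E. v \<in> e}. (1::nat))"
    by (simp add: degree_def)
  also have "\<dots> = (\<Sum>e\<in>E. \<Sum>v\<in>{v\<in>V. v \<in> e}. (1::nat))"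
    by (rule sum.swap_restrict[OF finV finE])
  also have "\<dots> = (\<Sum>e\<in>E. 2)"
  proof (rule sum.cong[OF refl])
    fix e assume "e \<in> E"
    hence "{v\<in>V. v \<in> e} = e" "card e = 2" using G by (auto simp: simple_graph_def)
    thus "(\<Sum>v\<in>{v\<in>V. v \<in> e}. (1::nat)) = 2" by simp
  qed
  finally show ?thesis by simp
qed

theorem theorem3:
  fixes V :: "'a set" and E :: "'a set set" and \<Delta> :: nat
  assumes "simple_graph V E"
    and "\<Delta> \<ge> 1"
    and "max_degree V E = \<Delta>"
  shows "real (num_cliques V E)
           \<le> 1 + real (card V) + ((2 ^ (\<Delta> + 1) - real \<Delta> - 2) / real ((\<Delta> + 1) choose 2)) * real (card E)
         \<and> 1 + real (card V) + ((2 ^ (\<Delta> + 1) - real \<Delta> - 2) / real ((\<Delta> + 1) choose 2)) * real (card E)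
           \<le> 1 + ((2 ^ (\<Delta> + 1) - 1) / real (\<Delta> + 1)) * real (card V)"
proof -
  note G = assms(1)
  have finV: "finite V" using G by (simp add: simple_graph_def)
  have finE: "finite E"
    by (rule finite_subset[of _ "Pow V"]) (use G finV in \<open>auto simp: simple_graph_def\<close>)
  have deg: "\<forall>v\<in>V. degree E v \<le> \<Delta>"
    using assms(3) finV by (auto simp: max_degree_def)
  define B where "B = (2 ^ (\<Delta> + 1) - real \<Delta> - 2) / real ((\<Delta> + 1) choose 2)"
  have Beq: "(\<Sum>j\<le>\<Delta> - 1. real ((\<Delta> - 1) choose j) * hh j) = B"
  proof -
    have "\<Delta> - 1 + 2 = \<Delta> + 1" "real (\<Delta> - 1 + 1) = real \<Delta>" using assms(2) by auto
    thus ?thesis using lemC[of "\<Delta> - 1"] by (simp add: B_def)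
  qed
  have pow: "(2::real) ^ (\<Delta> + 1) \<ge> real \<Delta> + 2"
  proof -
    have "\<Delta> + 2 \<le> (2::nat) ^ (\<Delta> + 1)" using assms(2)
    proof (induction \<Delta> rule: nat_induct_at_least)
      case base then show ?case by simp
    next
      case (Suc n) then show ?case by simp
    qed
    hence "real (\<Delta> + 2) \<le> real ((2::nat) ^ (\<Delta> + 1))" by (rule of_nat_mono)
    thus ?thesis by simp
  qed
  have c2: "2 * real ((\<Delta> + 1) choose 2) = real (\<Delta> + 1) * real \<Delta>"
  proof -
    have "(\<Delta> + 1) choose 2 = (\<Delta> + 1) * \<Delta> div 2" by (simp add: choose_two)
    moreover have "even ((\<Delta> + 1) * \<Delta>)" by simp
    ultimately have "2 * ((\<Delta> + 1) choose 2) = (\<Delta> + 1) * \<Delta>" by simp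
    hence "real (2 * ((\<Delta> + 1) choose 2)) = real ((\<Delta> + 1) * \<Delta>)" by metis
    thus ?thesis by (simp add: algebra_simps)
  qed
  have Bnn: "B \<ge> 0" unfolding B_def using pow by simp
  define C where "C = {S. is_clique V E S}"
  have finC: "finite C"
    by (rule finite_subset[of _ "Pow V"]) (auto simp: C_def is_clique_def finV)
  define C1 where "C1 = {S\<in>C. card S < 2}"
  define C2 where "C2 = {S\<in>C. 2 \<le> card S}"
  have Cu: "C = C1 \<union> C2" "C1 \<inter> C2 = {}" by (auto simp: C1_def C2_def)
  have finC1: "finite C1" "finite C2" using finC by (auto simp: C1_def C2_def)
  have "C1 \<subseteq> insert {} ((\<lambda>v. {v}) ` V)"
  proof
    fix S assume S: "S \<in> C1"
    hence "S \<subseteq> V" "card S < 2" by (auto simp: C1_def C_def is_clique_def)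
    moreover have "finite S" using \<open>S \<subseteq> V\<close> finV by (rule finite_subset)
    ultimately have fS: "finite S" and cS: "card S = 0 \<or> card S = 1" by (blast, linarith)
    show "S \<in> insert {} ((\<lambda>v. {v}) ` V)"
    proof (cases "card S = 0")
      case True thus ?thesis using fS by simp
    next
      case False
      hence "card S = 1" using cS by simp
      then obtain x where "S = {x}" by (auto simp: card_1_singleton_iff)
      thus ?thesis using \<open>S \<subseteq> V\<close> by auto
    qed
  qed
  hence "card C1 \<le> card (insert {} ((\<lambda>v. {v}) ` V))" by (rule card_mono[rotated]) (simp add: finV)
  also have "\<dots> \<le> Suc (card ((\<lambda>v. {v}) ` V))" by (simp add: card_insert_if finV)
  also have "\<dots> \<le> Suc (card V)" using card_image_le[OF finV, of "\<lambda>v. {v}"] by simp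
  finally have cC1: "real (card C1) \<le> 1 + real (card V)" by simp
  have "real (card C2) = (\<Sum>K\<in>C2. 1)" by simp
  also have "\<dots> = (\<Sum>K\<in>C2. \<Sum>e\<in>{e\<in>E. e \<subseteq> K}. 1 / real (card K choose 2))"
  proof (rule sum.cong[OF refl])
    fix K assume K: "K \<in> C2"
    hence Kc: "is_clique V E K" "2 \<le> card K" by (auto simp: C2_def C_def)
    have finK: "finite K" using Kc finV by (auto simp: is_clique_def intro: finite_subset)
    have "{e\<in>E. e \<subseteq> K} = {B. B \<subseteq> K \<and> card B = 2}"
      using Kc G by (auto simp: is_clique_def simple_graph_def card_2_iff)
    hence "card {e\<in>E. e \<subseteq> K} = card K choose 2" using n_subsets[OF finK] by simp
    moreover have "(card K choose 2) > 0" using Kc by simp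
    ultimately show "1 = (\<Sum>e\<in>{e\<in>E. e \<subseteq> K}. 1 / real (card K choose 2))" by simp
  qed
  also have "\<dots> = (\<Sum>e\<in>E. \<Sum>K\<in>{K\<in>C2. e \<subseteq> K}. 1 / real (card K choose 2))"
    by (rule sum.swap_restrict[OF finC1(2) finE])
  also have "\<dots> \<le> (\<Sum>e\<in>E. B)"
  proof (rule sum_mono)
    fix e assume eE: "e \<in> E"
    have "card e = 2" "finite e" using eE G by (auto simp: simple_graph_def card_2_iff)
    hence "{K\<in>C2. e \<subseteq> K} = {K. is_clique V E K \<and> e \<subseteq> K}"
    proof (intro set_eqI iffI)
      fix K assume "K \<in> {K. is_clique V E K \<and> e \<subseteq> K}"
      hence K: "is_clique V E K" "e \<subseteq> K" by auto
      hence "finite K" using finV by (auto simp: is_clique_def intro: finite_subset)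
      hence "card e \<le> card K" using K card_mono by blast
      thus "K \<in> {K\<in>C2. e \<subseteq> K}" using K \<open>card e = 2\<close> by (simp add: C2_def C_def)
    qed (auto simp: C2_def C_def)
    thus "(\<Sum>K\<in>{K\<in>C2. e \<subseteq> K}. 1 / real (card K choose 2)) \<le> B"
      using per_edge[OF G deg eE] Beq by simp
  qed
  also have "\<dots> = B * real (card E)" by simp
  finally have cC2: "real (card C2) \<le> B * real (card E)" .
  have "card C = card C1 + card C2" using Cu finC1 by (simp add: card_Un_disjoint)
  hence first: "real (num_cliques V E) \<le> 1 + real (card V) + B * real (card E)"
    using cC1 cC2 by (simp add: num_cliques_def C_def[symmetric])
  have "2 * card E = (\<Sum>v\<in>V. degree E v)" using handshake[OF G] by simp
  also have "\<dots> \<le> (\<Sum>v\<in>V. \<Delta>)" using deg by (intro sum_mono) auto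
  also have "\<dots> = card V * \<Delta>" by simp
  finally have hsn: "2 * card E \<le> card V * \<Delta>" .
  have hs: "2 * real (card E) \<le> real (card V) * real \<Delta>"
    using of_nat_mono[OF hsn, where 'a=real] by simp
  have "B * real (card E) \<le> B * (real (card V) * real \<Delta> / 2)"
    using hs Bnn by (intro mult_left_mono) auto
  also have "\<dots> = (2 ^ (\<Delta> + 1) - real \<Delta> - 2) / real (\<Delta> + 1) * real (card V)"
  proof -
    have p: "real ((\<Delta> + 1) choose 2) > 0" "real \<Delta> > 0" using assms(2) by auto
    have cq: "real ((\<Delta> + 1) choose 2) = real (\<Delta> + 1) * real \<Delta> / 2" using c2 by simp
    have gen: "X / (c * d / 2) * (n * d / 2) = X / c * n" if "c > 0" "d > 0" for X c d n :: real
      using that by (simp add: field_simps)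
    have "real (\<Delta> + 1) > 0" by simp
    show ?thesis unfolding B_def cq by (rule gen) (use p(2) in simp_all)
  qed
  finally have "1 + real (card V) + B * real (card E)
      \<le> 1 + real (card V) + (2 ^ (\<Delta> + 1) - real \<Delta> - 2) / real (\<Delta> + 1) * real (card V)" by simp
  also have "\<dots> = 1 + ((2 ^ (\<Delta> + 1) - 1) / real (\<Delta> + 1)) * real (card V)"
  proof -
    have gen: "n + (Y - (c - 1) - 2) / c * n = (Y - 1) / c * n" if "c > 0" for n Y c :: real
      using that by (simp add: field_simps)
    have e1: "real \<Delta> = real (\<Delta> + 1) - 1" by simp
    have "real (card V) + (2 ^ (\<Delta> + 1) - real \<Delta> - 2) / real (\<Delta> + 1) * real (card V)
        = ((2 ^ (\<Delta> + 1) - 1) / real (\<Delta> + 1)) * real (card V)"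
      by (subst e1) (rule gen, simp)
    thus ?thesis by simp
  qed
  finally show ?thesis using first by (simp add: B_def)
qed

end
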